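(* Let $\varphi=\forall x_1\exists y_1\cdots\forall x_k\exists y_k\,P$ be a positive Horn sentence over a finite relational signature $\sigma$ with $P$ a conjunction of equality-free atomic $\sigma$-formulas. Let $R\in\sigma$ be $p$-ary and let $t_1,\dots,t_p,t'\in T_\varphi(C_\omega)$ be such that $\mathrm{rank}(t')$ is distinct from each of $\mathrm{rank}(t_1),\dots,\mathrm{rank}(t_p)$. Then for every $t''\in T_\varphi(C_\omega)$: if $R(t_1,\dots,t_p)$ holds in $\mathcal{T}_\varphi(C_\omega)$, then $R(t_1[t'/t''],\dots,t_p[t'/t''])$ holds in $\mathcal{T}_\varphi(C_\omega)$.
   Context: Let $f_1,\dots,f_k$ be new function symbols, $f_i$ of arity $i$, $\mathrm{Sk}(\varphi)=\forall x_1\cdots\forall x_k\,P(x_1,f_1(x_1),\dots,x_k,f_k(x_1,\dots,x_k))$, and $C_\omega=\{c_1,c_2,\dots\}$ new constants. $T_\varphi(C_\omega)$ is the set of closed terms built from $C_\omega$ with the $f_i$; the rank of a term is the maximal nesting depth of function symbols in it (constants have rank $0$). $\mathcal{T}_\varphi(C_\omega)$ is the $\sigma$-structure on $T_\varphi(C_\omega)$ in which $R(s_1,\dots,s_p)$ holds iff it is obtained from an atom of the matrix of $\mathrm{Sk}(\varphi)$ by substituting terms for $x_1,\dots,x_k$. For terms $t,t',t''$, $t[t'/t'']$ is the term obtained from $t$ by replacing every occurrence of the subterm $t'$ by $t''$. *)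

theory Defs
  imports Main
begin

(* Closed terms over the constants C_omega = {c_0, c_1, ...} and the Skolem
   function symbols f_i (Fn i ts stands for f_i applied to ts). *)
datatype trm = Cst nat | Fn nat "trm list"

datatype var = X nat | Y nat

(* membership in T_phi(C_omega) for a sentence with k quantifier blocks:
   f_i has arity i and 1 <= i <= k *)
fun wf_trm :: "nat \<Rightarrow> trm \<Rightarrow> bool" where
  "wf_trm k (Cst c) = True"
| "wf_trm k (Fn i ts) = (1 \<le> i \<and> i \<le> k \<and> length ts = i \<and> (\<forall>t\<in>set ts. wf_trm k t))"

definition Terms :: "nat \<Rightarrow> trm set" where
  "Terms k = {t. wf_trm k t}"

fun rank :: "trm \<Rightarrow> nat" where
  "rank (Cst c) = 0"
| "rank (Fn i ts) = Suc (fold max (map rank ts) 0)"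

(* t[t'/t'']: replace every occurrence of the subterm t' by t'' *)
fun replace :: "trm \<Rightarrow> trm \<Rightarrow> trm \<Rightarrow> trm" where
  "replace t' t'' t = (if t = t' then t'' else
     (case t of Cst c \<Rightarrow> Cst c | Fn i ts \<Rightarrow> Fn i (map (replace t' t'') ts)))"

definition wf_atom :: "'r set \<Rightarrow> ('r \<Rightarrow> nat) \<Rightarrow> nat \<Rightarrow> 'r \<times> var list \<Rightarrow> bool" where
  "wf_atom \<sigma> ar k a = (fst a \<in> \<sigma> \<and> length (snd a) = ar (fst a) \<and>
     (\<forall>z\<in>set (snd a). (\<exists>j. 1 \<le> j \<and> j \<le> k \<and> (z = X j \<or> z = Y j))))"

(* positive Horn sentence in the given prefix form: matrix P is a conjunction
   (list) of equality-free atoms *)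
definition horn_sentence :: "'r set \<Rightarrow> ('r \<Rightarrow> nat) \<Rightarrow> nat \<Rightarrow> ('r \<times> var list) list \<Rightarrow> bool" where
  "horn_sentence \<sigma> ar k P = (finite \<sigma> \<and> (\<forall>a\<in>set P. wf_atom \<sigma> ar k a))"

(* value of a matrix variable in Sk(phi) under the assignment x_j := u j:
   x_j |-> u j, y_i |-> f_i(u 1, ..., u i) *)
fun sk_inst :: "(nat \<Rightarrow> trm) \<Rightarrow> var \<Rightarrow> trm" where
  "sk_inst u (X j) = u j"
| "sk_inst u (Y i) = Fn i (map u [1..<Suc i])"

(* R(s_1..s_p) holds in the term structure T_phi(C_omega) iff it is obtained
   from an atom of the matrix of Sk(phi) by substituting terms for x_1..x_k *)
definition holdsT :: "nat \<Rightarrow> ('r \<times> var list) list \<Rightarrow> 'r \<Rightarrow> trm list \<Rightarrow> bool" where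
  "holdsT k P R ss = (\<exists>zs. (R, zs) \<in> set P \<and>
     (\<exists>u. (\<forall>j. 1 \<le> j \<and> j \<le> k \<longrightarrow> u j \<in> Terms k) \<and> ss = map (sk_inst u) zs))"

end

theory Submission
  imports Defs
begin

lemma wf_replace: "wf_trm k t'' \<Longrightarrow> wf_trm k t \<Longrightarrow> wf_trm k (replace t' t'' t)"
proof (induction t)
  case (Cst c) then show ?case by simp
next
  case (Fn i ts)
  have "\<forall>x\<in>set ts. wf_trm k (replace t' t'' x)" using Fn by auto
  then show ?case using Fn.prems by (subst replace.simps) (simp del: replace.simps)
qed

theorem mainTheorem11:
  fixes \<sigma> :: "'r set" and ar :: "'r \<Rightarrow> nat" and k :: nat
    and P :: "('r \<times> var list) list" and R :: 'r
    and ts :: "trm list" and t' t'' :: trm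
  assumes "horn_sentence \<sigma> ar k P"
    and "R \<in> \<sigma>"
    and "length ts = ar R"
    and "\<forall>t\<in>set ts. t \<in> Terms k"
    and "t' \<in> Terms k"
    and rk: "\<forall>t\<in>set ts. rank t' \<noteq> rank t"
    and t'': "t'' \<in> Terms k"
    and "holdsT k P R ts"
  shows "holdsT k P R (map (replace t' t'') ts)"
proof -
  obtain zs u where zs: "(R, zs) \<in> set P" and u: "\<forall>j. 1 \<le> j \<and> j \<le> k \<longrightarrow> u j \<in> Terms k"
    and ts: "ts = map (sk_inst u) zs"
    using assms(8) unfolding holdsT_def by blast
  define u' where "u' = (\<lambda>j. replace t' t'' (u j))"
  have u': "\<forall>j. 1 \<le> j \<and> j \<le> k \<longrightarrow> u' j \<in> Terms k"
    using u t'' wf_replace unfolding u'_def Terms_def by blast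
  have "map (replace t' t'') ts = map (sk_inst u') zs"
    unfolding ts
    unfolding map_map comp_def
  proof (rule map_cong[OF refl])
    fix z assume z: "z \<in> set zs"
    then have "sk_inst u z \<in> set ts" using ts by auto
    then have ne: "sk_inst u z \<noteq> t'" using rk by auto
    show "replace t' t'' (sk_inst u z) = sk_inst u' z"
    proof (cases z)
      case (X j) then show ?thesis by (simp add: u'_def)
    next
      case (Y i) then show ?thesis using ne
        by (subst replace.simps) (simp add: u'_def del: replace.simps)
    qed
  qed
  then show ?thesis unfolding holdsT_def using zs u' by blast
qed

end
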